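(* Let $H$ and $G$ be finitely generated groups with $H<G$. Suppose some connected component of $\Gamma_m(H)$ has exponential growth, and let $S\in\Gamma_n(G)$ be a generating $n$-tuple of $G$. Then $\Gamma_{n+m}(G,S)$ has exponential growth. In particular, if $H<G$ and $H$ has exponential Nielsen growth, then $G$ also has exponential Nielsen growth.
   Context: For a group $G$, a generating $n$-tuple is $(g_1,\dots,g_n)\in G^n$ with $G=\langle g_1,\dots,g_n\rangle$. The product replacement graph $\Gamma_n(G)$ has vertices the generating $n$-tuples, with edges from $(g_1,\dots,g_n)$ to each tuple obtained by replacing $g_j$ by $g_jg_i^{\pm1}$ or $g_i^{\pm1}g_j$, for every ordered pair $i\neq j$. For $S=(g_1,\dots,g_n)\in\Gamma_n(G)$ and $m\ge0$, $S^{(m)}=(g_1,\dots,g_n,1,\dots,1)\in\Gamma_{n+m}(G)$ ($m$ trailing identities) and $\Gamma_{n+m}(G,S)$ is the connected component of $\Gamma_{n+m}(G)$ containing $S^{(m)}$. For a graph $\Gamma$ and vertex $v$, $B_\Gamma(v,r)$ is the set of vertices at path distance at most $r$ from $v$; a graph has exponential growth from $v$ if $|B_\Gamma(v,r)|\ge\alpha^r$ for some $\alpha>1$ and all sufficiently large $r$; a connected graph has exponential growth if it has exponential growth from some (equivalently every) vertex. $G$ has exponential Nielsen growth if $\Gamma_n(G,S)$ has exponential growth for some $n$ and some generating $n$-tuple $S$. *)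

theory Defs
  imports "HOL-Algebra.Algebra"
begin

definition fin_gen :: "('a, 'b) monoid_scheme \<Rightarrow> bool" where
  "fin_gen G \<longleftrightarrow> (\<exists>A. finite A \<and> A \<subseteq> carrier G \<and> generate G A = carrier G)"

definition gen_tuples :: "('a, 'b) monoid_scheme \<Rightarrow> nat \<Rightarrow> 'a list set" where
  "gen_tuples G n = {xs. length xs = n \<and> set xs \<subseteq> carrier G \<and> generate G (set xs) = carrier G}"

definition pr_edges :: "('a, 'b) monoid_scheme \<Rightarrow> nat \<Rightarrow> ('a list \<times> 'a list) set" where
  "pr_edges G n = {(xs, ys). xs \<in> gen_tuples G n \<and> ys \<in> gen_tuples G n \<and>
     (\<exists>i<n. \<exists>j<n. i \<noteq> j \<and>
        (ys = xs[j := xs ! j \<otimes>\<^bsub>G\<^esub> xs ! i] \<or>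
         ys = xs[j := xs ! j \<otimes>\<^bsub>G\<^esub> inv\<^bsub>G\<^esub> (xs ! i)] \<or>
         ys = xs[j := xs ! i \<otimes>\<^bsub>G\<^esub> xs ! j] \<or>
         ys = xs[j := inv\<^bsub>G\<^esub> (xs ! i) \<otimes>\<^bsub>G\<^esub> xs ! j]))}"

definition ball_graph :: "('v \<times> 'v) set \<Rightarrow> 'v \<Rightarrow> nat \<Rightarrow> 'v set" where
  "ball_graph E v r = {w. \<exists>k\<le>r. (v, w) \<in> E ^^ k}"

definition exp_growth_from :: "('v \<times> 'v) set \<Rightarrow> 'v \<Rightarrow> bool" where
  "exp_growth_from E v \<longleftrightarrow>
     (\<exists>\<alpha>::real. \<alpha> > 1 \<and> (\<exists>R. \<forall>r\<ge>R. \<alpha> ^ r \<le> real (card (ball_graph E v r))))"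

definition component :: "('v \<times> 'v) set \<Rightarrow> 'v \<Rightarrow> 'v set" where
  "component E v = {w. (v, w) \<in> E\<^sup>*}"

definition comp_exp_growth :: "('v \<times> 'v) set \<Rightarrow> 'v set \<Rightarrow> bool" where
  "comp_exp_growth E C \<longleftrightarrow> (\<exists>v\<in>C. exp_growth_from E v)"

definition pad :: "('a, 'b) monoid_scheme \<Rightarrow> 'a list \<Rightarrow> nat \<Rightarrow> 'a list" where
  "pad G S m = S @ replicate m \<one>\<^bsub>G\<^esub>"

definition pr_comp :: "('a, 'b) monoid_scheme \<Rightarrow> nat \<Rightarrow> 'a list \<Rightarrow> nat \<Rightarrow> 'a list set" where
  "pr_comp G n S m = component (pr_edges G (n + m)) (pad G S m)"

definition exp_nielsen_growth :: "('a, 'b) monoid_scheme \<Rightarrow> bool" where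
  "exp_nielsen_growth G \<longleftrightarrow>
     (\<exists>n S. S \<in> gen_tuples G n \<and> comp_exp_growth (pr_edges G n) (pr_comp G n S 0))"

end

theory Submission
  imports Defs
begin

lemma app_gen:
  fixes G (structure)
  assumes "group G" "set S \<subseteq> carrier G" "generate G (set S) = carrier G"
    "set u \<subseteq> carrier G" "length S = n" "length u = m"
  shows "S @ u \<in> gen_tuples G (n + m)"
proof -
  interpret group G by fact
  have "generate G (set (S @ u)) \<subseteq> carrier G"
    using generate_incl assms by auto
  moreover have "generate G (set S) \<subseteq> generate G (set (S @ u))"
    using mono_generate[of "set S" "set (S @ u)"] assms by auto
  ultimately show ?thesis using assms unfolding gen_tuples_def by auto
qed

lemma word_step:
  fixes G (structure)
  assumes "group G" "set S \<subseteq> carrier G" "generate G (set S) = carrier G"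
    "length S = n" "g \<in> generate G (set S)"
  shows "\<And>u. set u \<subseteq> carrier G \<Longrightarrow> length u = m \<Longrightarrow> k < m \<Longrightarrow>
     (S @ u, S @ u[k := u ! k \<otimes>\<^bsub>G\<^esub> g]) \<in> (pr_edges G (n + m))\<^sup>*"
  using assms(5)
proof (induction g rule: generate.induct)
  case one
  interpret group G by fact
  have "u ! k \<in> carrier G" using one by auto
  then show ?case by simp
next
  case (incl h)
  interpret group G by fact
  obtain i where i: "i < n" "S ! i = h" using incl assms by (metis in_set_conv_nth)
  have uk: "u ! k \<in> carrier G" "h \<in> carrier G" using incl assms by auto
  have g1: "S @ u \<in> gen_tuples G (n + m)" using app_gen assms incl by blast
  have g2: "S @ u[k := u ! k \<otimes> h] \<in> gen_tuples G (n + m)"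
      using app_gen[of G S "u[k := u ! k \<otimes> h]"] assms incl uk m_closed
      by (metis length_list_update set_update_subsetI)
  have eq: "S @ u[k := u ! k \<otimes> h] = (S @ u)[n + k := (S @ u) ! (n + k) \<otimes> (S @ u) ! i]"
    using i incl assms by (simp add: list_update_append nth_append)
  have "\<exists>i'<n+m. \<exists>j<n+m. i' \<noteq> j \<and> S @ u[k := u ! k \<otimes> h] = (S@u)[j := (S@u)!j \<otimes> (S@u)!i']"
    proof -
    have "n + k < n + m" "i \<noteq> n + k" "i < n + m" using i incl by auto
    then show ?thesis using eq by blast
  qed
  then have "(S @ u, S @ u[k := u ! k \<otimes> h]) \<in> pr_edges G (n + m)"
    unfolding pr_edges_def using g1 g2 by blast
  then show ?case by blast
next
  case (inv h)
  interpret group G by fact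
  obtain i where i: "i < n" "S ! i = h" using inv assms by (metis in_set_conv_nth)
  have uk: "u ! k \<in> carrier G" "h \<in> carrier G" using inv assms by auto
  have g1: "S @ u \<in> gen_tuples G (n + m)" using app_gen assms inv by blast
  have g2: "S @ u[k := u ! k \<otimes> inv h] \<in> gen_tuples G (n + m)"
      using app_gen[of G S "u[k := u ! k \<otimes> inv h]"] assms inv uk m_closed inv_closed
      by (metis length_list_update set_update_subsetI)
  have eq: "S @ u[k := u ! k \<otimes> inv h] = (S @ u)[n + k := (S @ u) ! (n + k) \<otimes> inv ((S @ u) ! i)]"
    using i inv assms by (simp add: list_update_append nth_append)
  have "\<exists>i'<n+m. \<exists>j<n+m. i' \<noteq> j \<and> S @ u[k := u ! k \<otimes> inv h] = (S@u)[j := (S@u)!j \<otimes> inv ((S@u)!i')]"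
    proof -
    have "n + k < n + m" "i \<noteq> n + k" "i < n + m" using i inv by auto
    then show ?thesis using eq by blast
  qed
  then have "(S @ u, S @ u[k := u ! k \<otimes> inv h]) \<in> pr_edges G (n + m)"
    unfolding pr_edges_def using g1 g2 by blast
  then show ?case by blast
next
  case (eng g1 g2)
  interpret group G by fact
  have c: "g1 \<in> carrier G" "g2 \<in> carrier G" "u ! k \<in> carrier G"
    using eng assms generate_incl by auto
  define u1 where "u1 = u[k := u ! k \<otimes> g1]"
  have 1: "(S @ u, S @ u1) \<in> (pr_edges G (n + m))\<^sup>*" using eng u1_def by blast
  have u1: "set u1 \<subseteq> carrier G" "length u1 = m"
    unfolding u1_def using eng.prems c by (intro set_update_subsetI; simp) (simp add: eng.prems)
  have 2: "(S @ u1, S @ u1[k := u1 ! k \<otimes> g2]) \<in> (pr_edges G (n + m))\<^sup>*"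
    using eng.IH(2) u1 eng.prems by blast
  have "u1[k := u1 ! k \<otimes> g2] = u[k := u ! k \<otimes> (g1 \<otimes> g2)]"
    using u1_def eng.prems c by (simp add: m_assoc)
  then show ?case using 1 2 by simp
qed

lemma take_drop_upd:
  assumes "k < length u" "length w = length u"
  shows "(take k w @ drop k u)[k := w ! k] = take (Suc k) w @ drop (Suc k) u"
  using assms by (intro nth_equalityI) (auto simp: nth_append nth_list_update min_def)

lemma reach_any:
  fixes G (structure)
  assumes "group G" "set S \<subseteq> carrier G" "generate G (set S) = carrier G"
    "length S = n" "set u \<subseteq> carrier G" "set w \<subseteq> carrier G" "length u = m" "length w = m"
  shows "(S @ u, S @ w) \<in> (pr_edges G (n + m))\<^sup>*"
proof -
  interpret group G by fact
  have "k \<le> m \<Longrightarrow> (S @ u, S @ (take k w @ drop k u)) \<in> (pr_edges G (n + m))\<^sup>*" for k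
  proof (induction k)
    case 0
    then show ?case by simp
  next
    case (Suc k)
    define x where "x = take k w @ drop k u"
    have km: "k < m" using Suc by simp
    have xk: "x ! k = u ! k" using km assms unfolding x_def by (simp add: nth_append)
    have xs: "set x \<subseteq> carrier G" "length x = m" unfolding x_def using assms km
      by (auto dest: in_set_takeD in_set_dropD)
    have ukc: "u ! k \<in> carrier G" "w ! k \<in> carrier G" using assms km by auto
    have "inv (u ! k) \<otimes> w ! k \<in> generate G (set S)" using ukc assms by simp
    from word_step[OF assms(1-4) this xs km]
    have "(S @ x, S @ x[k := x ! k \<otimes> (inv (u ! k) \<otimes> w ! k)]) \<in> (pr_edges G (n + m))\<^sup>*" .
    moreover have "x ! k \<otimes> (inv (u ! k) \<otimes> w ! k) = w ! k"
      using xk ukc by (simp add: m_assoc[symmetric])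
    moreover have "x[k := w ! k] = take (Suc k) w @ drop (Suc k) u"
      unfolding x_def using take_drop_upd[of k u w] km assms by simp
    ultimately show ?case using Suc x_def by (metis Suc_leD rtrancl_trans)
  qed
  from this[of m] show ?thesis using assms by simp
qed

lemma edge_embed:
  fixes G (structure)
  assumes "group G" "subgroup H G" "set S \<subseteq> carrier G" "generate G (set S) = carrier G"
    "length S = n" "(w, w') \<in> pr_edges (G\<lparr>carrier := H\<rparr>) m"
  shows "(S @ w, S @ w') \<in> pr_edges G (n + m)"
proof -
  interpret group G by fact
  from assms(6) obtain i j where ij: "i < m" "j < m" "i \<noteq> j"
    and w: "w \<in> gen_tuples (G\<lparr>carrier := H\<rparr>) m" "w' \<in> gen_tuples (G\<lparr>carrier := H\<rparr>) m"
    and c: "w' = w[j := w ! j \<otimes> w ! i] \<or>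
         w' = w[j := w ! j \<otimes> inv\<^bsub>G\<lparr>carrier := H\<rparr>\<^esub> (w ! i)] \<or>
         w' = w[j := w ! i \<otimes> w ! j] \<or>
         w' = w[j := inv\<^bsub>G\<lparr>carrier := H\<rparr>\<^esub> (w ! i) \<otimes> w ! j]"
    unfolding pr_edges_def by auto
  have wH: "set w \<subseteq> H" "set w' \<subseteq> H" "length w = m" "length w' = m"
    using w unfolding gen_tuples_def by auto
  have HG: "H \<subseteq> carrier G" using assms(2) subgroup.subset by blast
  have wi: "w ! i \<in> H" using wH ij by auto
  have inveq: "inv\<^bsub>G\<lparr>carrier := H\<rparr>\<^esub> (w ! i) = inv (w ! i)"
    using assms(2) wi by simp
  have g1: "S @ w \<in> gen_tuples G (n + m)" using app_gen[OF assms(1,3,4)] wH HG assms(5) by blast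
  have g2: "S @ w' \<in> gen_tuples G (n + m)" using app_gen[OF assms(1,3,4)] wH HG assms(5) by blast
  let ?x = "S @ w"
  have xi: "?x ! (n + i) = w ! i" "?x ! (n + j) = w ! j" using assms(5) by (auto simp: nth_append)
  have upd: "\<And>a. S @ w[j := a] = ?x[n + j := a]" using assms(5) by (simp add: list_update_append)
  have "S @ w' = ?x[n+j := ?x ! (n+j) \<otimes> ?x ! (n+i)] \<or>
         S @ w' = ?x[n+j := ?x ! (n+j) \<otimes> inv (?x ! (n+i))] \<or>
         S @ w' = ?x[n+j := ?x ! (n+i) \<otimes> ?x ! (n+j)] \<or>
         S @ w' = ?x[n+j := inv (?x ! (n+i)) \<otimes> ?x ! (n+j)]"
    using c unfolding xi upd[symmetric] inveq by auto
  moreover have "n + i < n + m" "n + j < n + m" "n + i \<noteq> n + j" using ij by auto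
  ultimately show ?thesis unfolding pr_edges_def using g1 g2 by blast
qed

lemma relpow_embed:
  assumes "\<And>a b. (a, b) \<in> E \<Longrightarrow> (f a, f b) \<in> F"
  shows "(a, b) \<in> E ^^ k \<Longrightarrow> (f a, f b) \<in> F ^^ k"
proof (induction k arbitrary: b)
  case 0
  then show ?case by simp
next
  case (Suc k)
  then obtain c where "(a, c) \<in> E ^^ k" "(c, b) \<in> E" by auto
  then show ?case using Suc assms by auto
qed

lemma ball_finite:
  assumes "\<And>x. finite (E `` {x})"
  shows "finite (ball_graph E v r)"
proof -
  have fk: "finite ((E ^^ k) `` {v})" for k
  proof (induction k)
    case 0
    then show ?case by simp
  next
    case (Suc k)
    have "(E ^^ Suc k) `` {v} = (\<Union>x\<in>(E ^^ k) `` {v}. E `` {x})" by auto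
    then show ?case using Suc assms by simp
  qed
  have "ball_graph E v r = (\<Union>k\<le>r. (E ^^ k) `` {v})" unfolding ball_graph_def by auto
  then show ?thesis using fk by simp
qed

lemma pr_edges_finite_succ:
  fixes G (structure)
  shows "finite (pr_edges G N `` {x})"
proof -
  have "pr_edges G N `` {x} \<subseteq> (\<Union>i<N. \<Union>j<N.
     {x[j := x ! j \<otimes> x ! i], x[j := x ! j \<otimes> inv (x ! i)], x[j := x ! i \<otimes> x ! j],
      x[j := inv (x ! i) \<otimes> x ! j]})"
    unfolding pr_edges_def by auto
  moreover have "finite (\<Union>i<N. \<Union>j<N.
     {x[j := x ! j \<otimes> x ! i], x[j := x ! j \<otimes> inv (x ! i)], x[j := x ! i \<otimes> x ! j],
      x[j := inv (x ! i) \<otimes> x ! j]})" by simp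
  ultimately show ?thesis by (rule finite_subset)
qed

lemma core:
  fixes G (structure)
  assumes "group G" "subgroup H G" "T \<in> gen_tuples (G\<lparr>carrier := H\<rparr>) m"
    "comp_exp_growth (pr_edges (G\<lparr>carrier := H\<rparr>) m) (component (pr_edges (G\<lparr>carrier := H\<rparr>) m) T)"
    "S \<in> gen_tuples G n"
  shows "comp_exp_growth (pr_edges G (n + m)) (pr_comp G n S m)"
proof -
  interpret group G by fact
  let ?EH = "pr_edges (G\<lparr>carrier := H\<rparr>) m"
  let ?EG = "pr_edges G (n + m)"
  obtain v where v: "v \<in> component ?EH T" "exp_growth_from ?EH v"
    using assms(4) unfolding comp_exp_growth_def by blast
  obtain \<alpha> :: real and R where a: "\<alpha> > 1" "\<forall>r\<ge>R. \<alpha> ^ r \<le> real (card (ball_graph ?EH v r))"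
    using v(2) unfolding exp_growth_from_def by blast
  have "(T, v) \<in> ?EH\<^sup>*" using v(1) unfolding component_def by simp
  then have vg: "v \<in> gen_tuples (G\<lparr>carrier := H\<rparr>) m"
    using assms(3) by (cases rule: rtranclE) (auto simp: pr_edges_def)
  have HG: "H \<subseteq> carrier G" using assms(2) subgroup.subset by blast
  have vH: "set v \<subseteq> carrier G" "length v = m" using vg HG unfolding gen_tuples_def by auto
  have S: "set S \<subseteq> carrier G" "generate G (set S) = carrier G" "length S = n"
    using assms(5) unfolding gen_tuples_def by auto
  have "(S @ replicate m \<one>, S @ v) \<in> ?EG\<^sup>*"
    using reach_any[OF assms(1) S, of "replicate m \<one>" v m] vH
    by (auto simp: set_replicate_conv_if)
  then have inC: "S @ v \<in> pr_comp G n S m"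
    unfolding pr_comp_def component_def pad_def by simp
  have "\<alpha> ^ r \<le> real (card (ball_graph ?EG (S @ v) r))" if "r \<ge> R" for r
  proof -
    have sub: "(\<lambda>w. S @ w) ` ball_graph ?EH v r \<subseteq> ball_graph ?EG (S @ v) r"
    proof
      fix y assume "y \<in> (\<lambda>w. S @ w) ` ball_graph ?EH v r"
      then obtain w k where "y = S @ w" "k \<le> r" "(v, w) \<in> ?EH ^^ k"
        unfolding ball_graph_def by auto
      moreover have "(S @ v, S @ w) \<in> ?EG ^^ k"
        using relpow_embed[of ?EH "\<lambda>w. S @ w" ?EG, OF _ \<open>(v, w) \<in> ?EH ^^ k\<close>]
          edge_embed[OF assms(1,2) S] by blast
      ultimately show "y \<in> ball_graph ?EG (S @ v) r" unfolding ball_graph_def by auto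
    qed
    have fin: "finite (ball_graph ?EG (S @ v) r)"
      by (rule ball_finite) (rule pr_edges_finite_succ)
    have "card (ball_graph ?EH v r) = card ((\<lambda>w. S @ w) ` ball_graph ?EH v r)"
      by (rule card_image[symmetric]) (simp add: inj_on_def)
    also have "\<dots> \<le> card (ball_graph ?EG (S @ v) r)" using card_mono[OF fin sub] .
    finally show ?thesis using a that by (meson of_nat_le_iff order_trans)
  qed
  then have "exp_growth_from ?EG (S @ v)" unfolding exp_growth_from_def using a(1) by blast
  then show ?thesis unfolding comp_exp_growth_def using inC by blast
qed

theorem proposition3p4:
  fixes G :: "('a, 'b) monoid_scheme" and H :: "'a set" and m n :: nat and S :: "'a list"
  assumes "group G" and "subgroup H G"
    and "fin_gen G" and "fin_gen (G\<lparr>carrier := H\<rparr>)"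
    and "\<exists>T \<in> gen_tuples (G\<lparr>carrier := H\<rparr>) m.
           comp_exp_growth (pr_edges (G\<lparr>carrier := H\<rparr>) m)
             (component (pr_edges (G\<lparr>carrier := H\<rparr>) m) T)"
    and "S \<in> gen_tuples G n"
  shows "comp_exp_growth (pr_edges G (n + m)) (pr_comp G n S m)
    \<and> (exp_nielsen_growth (G\<lparr>carrier := H\<rparr>) \<longrightarrow> exp_nielsen_growth G)"
proof
  show "comp_exp_growth (pr_edges G (n + m)) (pr_comp G n S m)"
    using core[OF assms(1,2) _ _ assms(6)] assms(5) by blast
next
  show "exp_nielsen_growth (G\<lparr>carrier := H\<rparr>) \<longrightarrow> exp_nielsen_growth G"
  proof
    assume "exp_nielsen_growth (G\<lparr>carrier := H\<rparr>)"
    then obtain k T where T: "T \<in> gen_tuples (G\<lparr>carrier := H\<rparr>) k"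
      "comp_exp_growth (pr_edges (G\<lparr>carrier := H\<rparr>) k) (pr_comp (G\<lparr>carrier := H\<rparr>) k T 0)"
      unfolding exp_nielsen_growth_def by blast
    have "pr_comp (G\<lparr>carrier := H\<rparr>) k T 0 = component (pr_edges (G\<lparr>carrier := H\<rparr>) k) T"
      unfolding pr_comp_def pad_def by simp
    then have c: "comp_exp_growth (pr_edges G (n + k)) (pr_comp G n S k)"
      using core[OF assms(1,2) T(1) _ assms(6)] T(2) by simp
    have S: "set S \<subseteq> carrier G" "generate G (set S) = carrier G" "length S = n"
      using assms(6) unfolding gen_tuples_def by auto
    have g: "pad G S k \<in> gen_tuples G (n + k)"
      unfolding pad_def using app_gen[OF assms(1) S(1,2), of "replicate k \<one>\<^bsub>G\<^esub>" n k] S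
        monoid.one_closed[OF group.is_monoid[OF assms(1)]]
      by (auto simp: set_replicate_conv_if)
    have "pr_comp G (n + k) (pad G S k) 0 = pr_comp G n S k"
      unfolding pr_comp_def by (simp add: pad_def)
    then show "exp_nielsen_growth G"
      unfolding exp_nielsen_growth_def using g c by metis
  qed
qed

end
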